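(* Let $(\Sigma_+,\Sigma_-,N_1,N_2,N_3)$ be a solution of the Wainwright–Hsu system satisfying the constraint, with $N_1=0$, $N_2>0$, $N_3<0$, and define for $i=1,2,3$ $$a_i(\tau)=\exp\Big(-\int_0^\tau(3\Sigma_i(s)+1)\,ds\Big),$$ where $\Sigma_1=-\frac23\Sigma_+$, $\Sigma_2=\frac13\Sigma_++\frac1{\sqrt3}\Sigma_-$, $\Sigma_3=\frac13\Sigma_+-\frac1{\sqrt3}\Sigma_-$. Then $a_i(\tau)\to0$ as $\tau\to\infty$ for $i=1,2,3$.
   Context: Wainwright–Hsu system: for functions $N_1,N_2,N_3,\Sigma_+,\Sigma_-$ of $\tau\in\mathbb{R}$ (prime denotes $d/d\tau$), $N_1'=(q-4\Sigma_+)N_1$, $N_2'=(q+2\Sigma_++2\sqrt3\Sigma_-)N_2$, $N_3'=(q+2\Sigma_+-2\sqrt3\Sigma_-)N_3$, $\Sigma_+'=-(2-q)\Sigma_+-3S_+$, $\Sigma_-'=-(2-q)\Sigma_--3S_-$, where $q=2(\Sigma_+^2+\Sigma_-^2)$, $S_+=\frac12[(N_2-N_3)^2-N_1(2N_1-N_2-N_3)]$, $S_-=\frac{\sqrt3}{2}(N_3-N_2)(N_1-N_2-N_3)$, together with the constraint $\Sigma_+^2+\Sigma_-^2+\frac34[N_1^2+N_2^2+N_3^2-2(N_1N_2+N_2N_3+N_1N_3)]=1$. (Geometrically, the spacetime metric is $-dt^2+\sum_i a_i^{-2}\xi^i\otimes\xi^i$ with $\xi^i$ a left-invariant coframe and $dt/d\tau=3/\theta$.)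 *)

theory Defs
  imports "HOL-Analysis.Analysis"
begin

definition wh_q :: "real \<Rightarrow> real \<Rightarrow> real" where
  "wh_q Sp Sm = 2 * (Sp\<^sup>2 + Sm\<^sup>2)"

definition wh_Sp :: "real \<Rightarrow> real \<Rightarrow> real \<Rightarrow> real" where
  "wh_Sp n1 n2 n3 = (1/2) * ((n2 - n3)\<^sup>2 - n1 * (2*n1 - n2 - n3))"

definition wh_Sm :: "real \<Rightarrow> real \<Rightarrow> real \<Rightarrow> real" where
  "wh_Sm n1 n2 n3 = (sqrt 3 / 2) * (n3 - n2) * (n1 - n2 - n3)"

definition WH_solution ::
  "(real \<Rightarrow> real) \<Rightarrow> (real \<Rightarrow> real) \<Rightarrow> (real \<Rightarrow> real) \<Rightarrow> (real \<Rightarrow> real) \<Rightarrow> (real \<Rightarrow> real) \<Rightarrow> bool"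
  where
  "WH_solution N1 N2 N3 Sp Sm \<longleftrightarrow>
     (\<forall>t. (N1 has_real_derivative (wh_q (Sp t) (Sm t) - 4 * Sp t) * N1 t) (at t)
        \<and> (N2 has_real_derivative (wh_q (Sp t) (Sm t) + 2 * Sp t + 2 * sqrt 3 * Sm t) * N2 t) (at t)
        \<and> (N3 has_real_derivative (wh_q (Sp t) (Sm t) + 2 * Sp t - 2 * sqrt 3 * Sm t) * N3 t) (at t)
        \<and> (Sp has_real_derivative
              (- (2 - wh_q (Sp t) (Sm t)) * Sp t - 3 * wh_Sp (N1 t) (N2 t) (N3 t))) (at t)
        \<and> (Sm has_real_derivative
              (- (2 - wh_q (Sp t) (Sm t)) * Sm t - 3 * wh_Sm (N1 t) (N2 t) (N3 t))) (at t)
        \<and> (Sp t)\<^sup>2 + (Sm t)\<^sup>2 + (3/4) * ((N1 t)\<^sup>2 + (N2 t)\<^sup>2 + (N3 t)\<^sup>2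
             - 2 * (N1 t * N2 t + N2 t * N3 t + N1 t * N3 t)) = 1)"

definition int0 :: "(real \<Rightarrow> real) \<Rightarrow> real \<Rightarrow> real" where
  "int0 f \<tau> = (if 0 \<le> \<tau> then integral {0..\<tau>} f else - integral {\<tau>..0} f)"

definition scale_factor :: "(real \<Rightarrow> real) \<Rightarrow> real \<Rightarrow> real" where
  "scale_factor Si \<tau> = exp (- int0 (\<lambda>s. 3 * Si s + 1) \<tau>)"

end

theory Submission
  imports Defs "HOL-Real_Asymp.Real_Asymp"
begin

lemma dln:
  fixes f :: "real \<Rightarrow> real"
  assumes d: "(f has_real_derivative k * f t) (at t)" and p: "f t > 0"
  shows "((\<lambda>x. ln (f x)) has_real_derivative k) (at t)"
proof -
  have "((\<lambda>x. ln (f x)) has_real_derivative (1 / f t) * (k * f t)) (at t)"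
    by (rule DERIV_chain2[OF DERIV_ln_divide[OF p] d])
  then show ?thesis using p by simp
qed

lemma int0_eq:
  fixes G g :: "real \<Rightarrow> real"
  assumes d: "\<And>t. (G has_real_derivative g t) (at t)" and t: "0 \<le> \<tau>"
  shows "int0 g \<tau> = G \<tau> - G 0"
proof -
  have "(g has_integral (G \<tau> - G 0)) {0..\<tau>}"
    apply (rule fundamental_theorem_of_calculus[OF t])
    using d by (metis has_field_derivative_at_within has_real_derivative_iff_has_vector_derivative)
  then show ?thesis using t unfolding int0_def by (simp add: integral_unique)
qed

lemma sf_lim:
  fixes G S :: "real \<Rightarrow> real"
  assumes d: "\<And>t. (G has_real_derivative 3 * S t + 1) (at t)"
    and lim: "filterlim G at_top at_top"
  shows "(scale_factor S \<longlongrightarrow> 0) at_top"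
proof -
  have ev: "eventually (\<lambda>\<tau>. exp (-(G \<tau> - G 0)) = scale_factor S \<tau>) at_top"
    using eventually_ge_at_top[of 0]
    by eventually_elim (simp add: scale_factor_def int0_eq[OF d])
  have "filterlim (\<lambda>\<tau>. (- G 0) + G \<tau>) at_top at_top"
    by (rule filterlim_tendsto_add_at_top[OF tendsto_const lim])
  then have "filterlim (\<lambda>\<tau>. G \<tau> - G 0) at_top at_top" by simp
  then have "filterlim (\<lambda>\<tau>. -(G \<tau> - G 0)) at_bot at_top"
    by (simp add: filterlim_uminus_at_bot)
  then have "((\<lambda>\<tau>. exp (-(G \<tau> - G 0))) \<longlongrightarrow> 0) at_top"
    by (rule filterlim_compose[OF exp_at_bot])
  then show ?thesis using ev by (rule Lim_transform_eventually)
qed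

theorem mainTheorem18:
  fixes N1 N2 N3 Sp Sm :: "real \<Rightarrow> real"
  assumes sol: "WH_solution N1 N2 N3 Sp Sm"
    and N1z: "\<forall>t. N1 t = 0"
    and N2p: "\<forall>t. N2 t > 0"
    and N3n: "\<forall>t. N3 t < 0"
  defines "S1 \<equiv> (\<lambda>s. - (2/3) * Sp s)"
    and "S2 \<equiv> (\<lambda>s. (1/3) * Sp s + (1 / sqrt 3) * Sm s)"
    and "S3 \<equiv> (\<lambda>s. (1/3) * Sp s - (1 / sqrt 3) * Sm s)"
  shows "(scale_factor S1 \<longlongrightarrow> 0) at_top \<and>
         (scale_factor S2 \<longlongrightarrow> 0) at_top \<and>
         (scale_factor S3 \<longlongrightarrow> 0) at_top"
proof -
  define e where "e = (\<lambda>t. 1 + Sp t)"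
  define D where "D = (\<lambda>t. N2 t - N3 t)"
  have dN2: "\<And>t. (N2 has_real_derivative (wh_q (Sp t) (Sm t) + 2 * Sp t + 2 * sqrt 3 * Sm t) * N2 t) (at t)"
    using sol unfolding WH_solution_def by blast
  have dN3: "\<And>t. (N3 has_real_derivative (wh_q (Sp t) (Sm t) + 2 * Sp t - 2 * sqrt 3 * Sm t) * N3 t) (at t)"
    using sol unfolding WH_solution_def by blast
  have dSp: "\<And>t. (Sp has_real_derivative
              (- (2 - wh_q (Sp t) (Sm t)) * Sp t - 3 * wh_Sp (N1 t) (N2 t) (N3 t))) (at t)"
    using sol unfolding WH_solution_def by blast
  have con: "\<And>t. (Sp t)\<^sup>2 + (Sm t)\<^sup>2 + (3/4) * ((N1 t)\<^sup>2 + (N2 t)\<^sup>2 + (N3 t)\<^sup>2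
             - 2 * (N1 t * N2 t + N2 t * N3 t + N1 t * N3 t)) = 1"
    using sol unfolding WH_solution_def by blast
  have con2: "(Sp t)\<^sup>2 + (Sm t)\<^sup>2 + 3/4 * (D t)\<^sup>2 = 1" for t
    using con[of t] N1z unfolding D_def by (simp add: power2_eq_square algebra_simps)
  have q: "wh_q (Sp t) (Sm t) = 2 - 3/2 * (D t)\<^sup>2" for t
    using con2[of t] unfolding wh_q_def by (simp add: algebra_simps)
  have Dpos: "D t > 0" for t using N2p N3n unfolding D_def by (smt (verit))
  have Sp1: "\<bar>Sp t\<bar> < 1" for t
  proof -
    have "(D t)\<^sup>2 > 0" using Dpos[of t] by simp
    moreover have "0 \<le> (Sm t)\<^sup>2" by simp
    ultimately have "(Sp t)\<^sup>2 < 1" using con2[of t] by linarith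
    then show ?thesis by (simp add: abs_square_less_1)
  qed
  have epos: "e t > 0" for t using Sp1[of t] unfolding e_def by linarith
  have D2: "3/4 * (D t)\<^sup>2 \<le> 2 * e t" for t
  proof -
    have "0 \<le> (Sm t)\<^sup>2" by simp
    then have "3/4 * (D t)\<^sup>2 \<le> 1 - (Sp t)\<^sup>2" using con2[of t] by linarith
    also have "\<dots> = e t * (2 - e t)" unfolding e_def by (simp add: power2_eq_square algebra_simps)
    also have "\<dots> \<le> 2 * e t" using epos[of t] by (simp add: mult_le_cancel_left)
    finally show ?thesis .
  qed
  have de: "(e has_real_derivative -(3/2)*(D t)\<^sup>2 * e t) (at t)" for t
  proof -
    have "(e has_real_derivative 0 + (- (2 - wh_q (Sp t) (Sm t)) * Sp t - 3 * wh_Sp (N1 t) (N2 t) (N3 t))) (at t)"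
      unfolding e_def by (intro DERIV_add DERIV_const dSp)
    then show ?thesis
      by (rule DERIV_cong) (simp add: q wh_Sp_def N1z e_def D_def field_simps power2_eq_square)
  qed
  have dLe: "((\<lambda>x. ln (e x)) has_real_derivative -(3/2)*(D t)\<^sup>2) (at t)" for t
    by (rule dln[OF de epos])
  have dL2: "((\<lambda>x. ln (N2 x)) has_real_derivative (2 - 3/2*(D t)\<^sup>2 + 2*Sp t + 2* sqrt 3*Sm t)) (at t)" for t
    using dln[OF dN2[of t]] N2p by (simp add: q)
  have dmN3: "((\<lambda>x. - N3 x) has_real_derivative (wh_q (Sp t) (Sm t) + 2 * Sp t - 2 * sqrt 3 * Sm t) * (- N3 t)) (at t)" for t
    using DERIV_minus[OF dN3[of t]] by simp
  have dL3: "((\<lambda>x. ln (- N3 x)) has_real_derivative (2 - 3/2*(D t)\<^sup>2 + 2*Sp t - 2* sqrt 3*Sm t)) (at t)" for t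
    using dln[OF dmN3[of t]] N3n by (simp add: q)
  define A where "A = inverse (e 0)"
  have Apos: "A > 0" unfolding A_def using epos[of 0] by simp
  have B1: "inverse (e t) \<le> A + 4*t" if t: "0 \<le> t" for t
  proof -
    have "(\<lambda>x. inverse (e x) - 4*x) t \<le> (\<lambda>x. inverse (e x) - 4*x) 0"
    proof (rule deriv_nonpos_imp_antimono[OF _ _ t])
      fix x
      show "((\<lambda>x. inverse (e x) - 4*x) has_real_derivative
          (- (-(3/2)*(D x)\<^sup>2 * e x * inverse (e x ^ Suc (Suc 0))) - 4)) (at x)"
        using epos[of x] by (intro DERIV_diff DERIV_inverse_fun de) (auto intro!: derivative_eq_intros)
      have "- (-(3/2)*(D x)\<^sup>2 * e x * inverse (e x ^ Suc (Suc 0))) = 3/2*(D x)\<^sup>2 / e x"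
        using epos[of x] by (simp add: field_simps power2_eq_square)
      also have "\<dots> \<le> 4" using D2[of x] epos[of x] by (simp add: divide_le_eq)
      finally show "- (-(3/2)*(D x)\<^sup>2 * e x * inverse (e x ^ Suc (Suc 0))) - 4 \<le> 0" by simp
    qed
    then show ?thesis unfolding A_def by simp
  qed
  define Q where "Q = (\<lambda>t. ln (N2 t) + ln (- N3 t) - 3/2 * ln (e t))"
  have dQ: "(Q has_real_derivative 4 * e t - 3/4 * (D t)\<^sup>2) (at t)" for t
  proof -
    have "(Q has_real_derivative (2 - 3/2*(D t)\<^sup>2 + 2*Sp t + 2* sqrt 3*Sm t)
       + (2 - 3/2*(D t)\<^sup>2 + 2*Sp t - 2* sqrt 3*Sm t) - 3/2 * (-(3/2)*(D t)\<^sup>2)) (at t)"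
      unfolding Q_def by (intro DERIV_add DERIV_diff DERIV_cmult dL2 dL3 dLe)
    then show ?thesis by (rule DERIV_cong) (simp add: e_def algebra_simps)
  qed
  have B2: "Q 0 - ln A / 2 + ln (A + 4*t) / 2 \<le> Q t" if t: "0 \<le> t" for t
  proof -
    have "(\<lambda>x. Q x - ln (A + 4*x) / 2) 0 \<le> (\<lambda>x. Q x - ln (A + 4*x) / 2) t"
    proof (rule deriv_nonneg_imp_mono[OF _ _ t])
      fix x assume x: "x \<in> {0..t}"
      then have pos: "A + 4*x > 0" using Apos by auto
      show "((\<lambda>x. Q x - ln (A + 4*x) / 2) has_real_derivative
          (4 * e x - 3/4 * (D x)\<^sup>2) - (1 / (A + 4*x) * (0 + 4 * 1)) / 2) (at x)"
      proof -
        have dl: "((\<lambda>x. ln (A + 4*x)) has_real_derivative 1 / (A + 4*x) * (0 + 4 * 1)) (at x)"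
          by (rule DERIV_chain2[where g="\<lambda>x. A + 4*x", OF DERIV_ln_divide[OF pos]])
            (intro DERIV_add DERIV_const DERIV_cmult DERIV_ident)
        show ?thesis by (intro DERIV_diff DERIV_cdivide dQ dl)
      qed
      have "inverse (e x) \<le> A + 4*x" using B1 x by auto
      then have "inverse (A + 4*x) \<le> inverse (inverse (e x))"
        by (rule le_imp_inverse_le) (use epos[of x] in simp)
      then have "1 / (A + 4*x) \<le> e x" by (simp add: inverse_eq_divide)
      then show "0 \<le> (4 * e x - 3/4 * (D x)\<^sup>2) - (1 / (A + 4*x) * (0 + 4 * 1)) / 2"
      proof -
        have "(1 / (A + 4*x) * (0 + 4 * 1)) / 2 = 2 * (1 / (A + 4*x))" using pos by (simp add: field_simps)
        then show ?thesis using D2[of x] \<open>1 / (A + 4*x) \<le> e x\<close> by linarith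
      qed
    qed
    then show ?thesis by simp
  qed
  have s3: "3 * (1 / sqrt 3) = sqrt (3::real)"
    by (metis divide_divide_eq_right mult.commute div_by_1 real_div_sqrt zero_le_numeral)
  have lnD: "2 * ln (D t) \<le> ln (8/3) + ln (e t)" for t
  proof -
    have "2 * ln (D t) = ln ((D t)\<^sup>2)" using Dpos[of t] by (simp add: ln_realpow)
    also have "\<dots> \<le> ln (8/3 * e t)" using D2[of t] Dpos[of t] epos[of t] by simp
    also have "\<dots> = ln (8/3) + ln (e t)" by (rule ln_mult_pos) (use epos[of t] in simp_all)
    finally show ?thesis .
  qed
  have lnN2: "ln (N2 t) \<le> ln (D t)" for t
  proof -
    have "N2 t \<le> D t" using N3n unfolding D_def by (simp add: less_imp_le)
    then show ?thesis using N2p Dpos[of t] by (subst ln_le_cancel_iff) auto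
  qed
  have lnN3: "ln (- N3 t) \<le> ln (D t)" for t
  proof -
    have "- N3 t \<le> D t" using N2p unfolding D_def by (simp add: less_imp_le)
    then show ?thesis using N3n Dpos[of t] by (subst ln_le_cancel_iff) auto
  qed
  have lim2: "filterlim (\<lambda>t. (Q 0 - ln A / 2 - ln (8/3) / 2 + ln (A + 4*t) / 2) / 2) at_top at_top"
    using Apos by real_asymp
  have G2': "filterlim (\<lambda>t. ln (N2 t) / 2 - ln (e t) / 2) at_top at_top"
    using lim2
  proof (rule filterlim_at_top_mono)
    show "\<forall>\<^sub>F t in at_top. (Q 0 - ln A / 2 - ln (8/3) / 2 + ln (A + 4*t) / 2) / 2 \<le> ln (N2 t) / 2 - ln (e t) / 2"
      using eventually_ge_at_top[of 0]
    proof eventually_elim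
      case (elim t) then show ?case using B2[of t] lnN3[of t] lnD[of t] unfolding Q_def by simp
    qed
  qed
  have G3': "filterlim (\<lambda>t. ln (- N3 t) / 2 - ln (e t) / 2) at_top at_top"
    using lim2
  proof (rule filterlim_at_top_mono)
    show "\<forall>\<^sub>F t in at_top. (Q 0 - ln A / 2 - ln (8/3) / 2 + ln (A + 4*t) / 2) / 2 \<le> ln (- N3 t) / 2 - ln (e t) / 2"
      using eventually_ge_at_top[of 0]
    proof eventually_elim
      case (elim t) then show ?case using B2[of t] lnN2[of t] lnD[of t] unfolding Q_def by simp
    qed
  qed
  have lnP: "ln (N2 t) + ln (- N3 t) \<le> ln (2/3) + ln (e t)" for t
  proof -
    have "ln (N2 t) + ln (- N3 t) = ln (N2 t * (- N3 t))" by (rule ln_mult_pos[symmetric]) (use N2p N3n in auto)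
    also have "\<dots> \<le> ln (2/3 * e t)"
    proof -
      have eq: "(D t)\<^sup>2 - 4 * (N2 t * (- N3 t)) = (N2 t + N3 t)\<^sup>2"
        unfolding D_def by (simp add: power2_eq_square algebra_simps)
      have "0 \<le> (N2 t + N3 t)\<^sup>2" by simp
      then have "N2 t * (- N3 t) \<le> (D t)\<^sup>2 / 4" using eq by linarith
      also have "\<dots> \<le> 2/3 * e t" using D2[of t] by simp
      finally have le: "N2 t * (- N3 t) \<le> 2/3 * e t" .
      have "0 < N2 t * (- N3 t)" using N2p N3n by (simp add: mult_pos_neg)
      then show ?thesis using le epos[of t] by (subst ln_le_cancel_iff) auto
    qed
    also have "\<dots> = ln (2/3) + ln (e t)" by (rule ln_mult_pos) (use epos[of t] in simp_all)
    finally show ?thesis .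
  qed
  have lnE: "- (A + 4*t) \<le> ln (e t)" if "0 \<le> t" for t
  proof -
    have "ln (inverse (e t)) \<le> ln (A + 4*t)" using B1[OF that] epos[of t] Apos that by (subst ln_le_cancel_iff) auto
    also have "\<dots> \<le> A + 4*t - 1" using Apos that by (intro ln_le_minus_one) simp
    finally show ?thesis by (simp add: ln_inverse)
  qed
  have lim1: "filterlim (\<lambda>t. t - ln (2/3) / 2 - A / 2) at_top at_top"
    by real_asymp
  have G1: "filterlim (\<lambda>t. 3 * t - ln (N2 t) / 2 - ln (- N3 t) / 2 + ln (e t)) at_top at_top"
    using lim1
  proof (rule filterlim_at_top_mono)
    show "\<forall>\<^sub>F t in at_top. t - ln (2/3) / 2 - A / 2 \<le> 3 * t - ln (N2 t) / 2 - ln (- N3 t) / 2 + ln (e t)"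
      using eventually_ge_at_top[of 0]
    proof eventually_elim
      case (elim t) then show ?case using lnP[of t] lnE[of t] by simp
    qed
  qed
  have dG1: "((\<lambda>t. 3 * t - ln (N2 t) / 2 - ln (- N3 t) / 2 + ln (e t)) has_real_derivative 3 * S1 t + 1) (at t)" for t
  proof -
    have "((\<lambda>t. 3 * t - ln (N2 t) / 2 - ln (- N3 t) / 2 + ln (e t)) has_real_derivative
       3 * 1 - (2 - 3/2*(D t)\<^sup>2 + 2*Sp t + 2* sqrt 3*Sm t) / 2 - (2 - 3/2*(D t)\<^sup>2 + 2*Sp t - 2* sqrt 3*Sm t) / 2
       + (-(3/2)*(D t)\<^sup>2)) (at t)"
      by (intro DERIV_add DERIV_diff DERIV_cdivide DERIV_cmult DERIV_ident dL2 dL3 dLe)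
    then show ?thesis by (rule DERIV_cong) (simp add: S1_def field_simps)
  qed
  have dG2: "((\<lambda>t. ln (N2 t) / 2 - ln (e t) / 2) has_real_derivative 3 * S2 t + 1) (at t)" for t
  proof -
    have "((\<lambda>t. ln (N2 t) / 2 - ln (e t) / 2) has_real_derivative
       (2 - 3/2*(D t)\<^sup>2 + 2*Sp t + 2* sqrt 3*Sm t) / 2 - (-(3/2)*(D t)\<^sup>2) / 2) (at t)"
      by (intro DERIV_diff DERIV_cdivide dL2 dLe)
    then show ?thesis
    proof (rule DERIV_cong)
      have "3 * S2 t + 1 = Sp t + (3 * (1 / sqrt 3)) * Sm t + 1" unfolding S2_def by (simp add: algebra_simps)
      then show "(2 - 3/2*(D t)\<^sup>2 + 2*Sp t + 2* sqrt 3*Sm t) / 2 - (-(3/2)*(D t)\<^sup>2) / 2 = 3 * S2 t + 1"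
        unfolding s3 by (simp add: field_simps)
    qed
  qed
  have dG3: "((\<lambda>t. ln (- N3 t) / 2 - ln (e t) / 2) has_real_derivative 3 * S3 t + 1) (at t)" for t
  proof -
    have "((\<lambda>t. ln (- N3 t) / 2 - ln (e t) / 2) has_real_derivative
       (2 - 3/2*(D t)\<^sup>2 + 2*Sp t - 2* sqrt 3*Sm t) / 2 - (-(3/2)*(D t)\<^sup>2) / 2) (at t)"
      by (intro DERIV_diff DERIV_cdivide dL3 dLe)
    then show ?thesis
    proof (rule DERIV_cong)
      have "3 * S3 t + 1 = Sp t - (3 * (1 / sqrt 3)) * Sm t + 1" unfolding S3_def by (simp add: algebra_simps)
      then show "(2 - 3/2*(D t)\<^sup>2 + 2*Sp t - 2* sqrt 3*Sm t) / 2 - (-(3/2)*(D t)\<^sup>2) / 2 = 3 * S3 t + 1"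
        unfolding s3 by (simp add: field_simps)
    qed
  qed
  show ?thesis
    using sf_lim[OF dG1 G1] sf_lim[OF dG2 G2'] sf_lim[OF dG3 G3'] by blast
qed

end
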